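(* For each $n\ge1$ let $(B_n,X^n(0),Y^n)$ be a random element of $\overline{\mathbb{R}}_+\times\mathbb{R}^2\times D^2$, and let $(\hat X^n,\hat V^n)\in D^2\times D^2$ be the unique solution of \begin{align*} \hat{X}_1^n(t) &= X_1^n(0) + Y^{n}_1(t) + \int_0^t(-\hat{X}_1^n(s)+\hat{X}_2^n(s))\,ds - \hat{V}_1^n(t), \\ \hat{X}_2^n(t) &= X_2^n(0) + Y^{n}_2(t) - \int_0^t\hat{X}_2^n(s)\,ds +\hat{V}_1^n(t)- \hat{V}_2^n(t), \end{align*} with $\hat X_1^n\le0$, $\hat X_2^n\le B_n$, $\hat V_1^n,\hat V_2^n$ nondecreasing nonnegative, $\int_0^\infty \mathbb{1}\{\hat{X}_1^n(t) < 0\}\,d\hat{V}_1^n(t)=0$ and $\int_0^\infty \mathbb{1}\{\hat{X}_2^n(t) < B_n\}\,d\hat{V}_2^n(t)=0$. If the sequences $(X^n(0))_{n\ge1}$ and $(Y_i^n)_{n\ge1}$, $i=1,2$, are stochastically bounded, then $(\hat X^n)_{n\ge1}$ is stochastically bounded in $D^2$ (no boundedness of $B_n$ is required).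
   Context: A sequence of random elements $Z^n$ of $D$ (or $D^k$) is stochastically bounded if for every $t>0$ the sequence of real random variables $\|Z^n\|_t=\sup_{0\le s\le t}|Z^n(s)|$ (max over coordinates for $D^k$) is tight; a sequence of random vectors in $\mathbb{R}^k$ is stochastically bounded if it is tight. $D=D([0,\infty),\mathbb{R})$; $\overline{\mathbb{R}}_+=[0,\infty)\cup\{\infty\}$. *)

theory Defs
  imports "HOL-Probability.Probability"
begin

text \<open>Paths on [0,infinity) are modelled as functions real => real; only t >= 0 matters.\<close>

definition cadlag :: "(real \<Rightarrow> real) \<Rightarrow> bool" where
  "cadlag f \<longleftrightarrow> (\<forall>t\<ge>0. continuous (at_right t) f \<and> (0 < t \<longrightarrow> (\<exists>l. (f \<longlongrightarrow> l) (at_left t))))"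

text \<open>Random element of D (on probability space M): cadlag paths, measurable coordinates
  (the Skorokhod Borel sigma-algebra on D is generated by the coordinate projections).\<close>
definition random_element_D :: "'a measure \<Rightarrow> ('a \<Rightarrow> real \<Rightarrow> real) \<Rightarrow> bool" where
  "random_element_D M Z \<longleftrightarrow>
     (\<forall>\<omega>\<in>space M. cadlag (Z \<omega>)) \<and> (\<forall>t\<ge>0. (\<lambda>\<omega>. Z \<omega> t) \<in> borel_measurable M)"

text \<open>Tightness of a sequence of real random variables xi n defined on probability spaces M n.
  Formulated with outer probability so that it does not depend on measurability.\<close>
definition stoch_bounded_rv :: "(nat \<Rightarrow> 'a measure) \<Rightarrow> (nat \<Rightarrow> 'a \<Rightarrow> real) \<Rightarrow> bool" where
  "stoch_bounded_rv M \<xi> \<longleftrightarrow>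
     (\<forall>\<epsilon>>0. \<exists>K. \<forall>n. \<exists>A\<in>sets (M n).
        {\<omega>\<in>space (M n). K < \<bar>\<xi> n \<omega>\<bar>} \<subseteq> A \<and> measure (M n) A \<le> \<epsilon>)"

definition sup_norm :: "(real \<Rightarrow> real) \<Rightarrow> real \<Rightarrow> real" where
  "sup_norm f t = (SUP s\<in>{0..t}. \<bar>f s\<bar>)"

definition stoch_bounded_D :: "(nat \<Rightarrow> 'a measure) \<Rightarrow> (nat \<Rightarrow> 'a \<Rightarrow> real \<Rightarrow> real) \<Rightarrow> bool" where
  "stoch_bounded_D M Z \<longleftrightarrow> (\<forall>t>0. stoch_bounded_rv M (\<lambda>n \<omega>. sup_norm (Z n \<omega>) t))"

definition stoch_bounded_D2 :: "(nat \<Rightarrow> 'a measure) \<Rightarrow> (nat \<Rightarrow> 'a \<Rightarrow> real \<Rightarrow> real)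
    \<Rightarrow> (nat \<Rightarrow> 'a \<Rightarrow> real \<Rightarrow> real) \<Rightarrow> bool" where
  "stoch_bounded_D2 M Z1 Z2 \<longleftrightarrow>
     (\<forall>t>0. stoch_bounded_rv M (\<lambda>n \<omega>. max (sup_norm (Z1 n \<omega>) t) (sup_norm (Z2 n \<omega>) t)))"

text \<open>Lebesgue--Stieltjes measure dV on [0,infinity) of a nondecreasing nonnegative cadlag V,
  with the convention V(0-) = 0 (so a jump at time 0 carries mass V(0)).\<close>
definition LS_measure :: "(real \<Rightarrow> real) \<Rightarrow> real measure" where
  "LS_measure V = interval_measure (\<lambda>t. if t < 0 then 0 else V t)"

end

theory Submission
  imports Defs
begin

lemma cadlag_local_bound:
  assumes "cadlag f" "0 \<le> x"
  shows "\<exists>d C. d > 0 \<and> (\<forall>y. 0 \<le> y \<longrightarrow> dist y x < d \<longrightarrow> \<bar>f y\<bar> \<le> C)"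
proof -
  have rc: "continuous (at_right x) f" using assms unfolding cadlag_def by auto
  hence "(f \<longlongrightarrow> f x) (at_right x)" by (simp add: continuous_within)
  hence "eventually (\<lambda>y. dist (f y) (f x) < 1) (at_right x)" by (rule tendstoD) simp
  then obtain b1 where b1: "b1 > x" "\<forall>y>x. y < b1 \<longrightarrow> dist (f y) (f x) < 1"
    using eventually_at_right[of x "x+1"] by auto
  obtain b2 C2 where b2: "b2 < x" "\<forall>y>b2. y < x \<longrightarrow> 0 \<le> y \<longrightarrow> \<bar>f y\<bar> \<le> C2"
  proof (cases "x = 0")
    case True
    show ?thesis by (rule that[of "-1" 0]) (use True in auto)
  next
    case False
    with assms have "0 < x" by auto
    with assms obtain l where "(f \<longlongrightarrow> l) (at_left x)" unfolding cadlag_def by blast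
    hence "eventually (\<lambda>y. dist (f y) l < 1) (at_left x)" by (rule tendstoD) simp
    then obtain b where "b < x" "\<forall>y>b. y < x \<longrightarrow> dist (f y) l < 1"
      using eventually_at_left[of "x - 1" x] by auto
    then show ?thesis
      by (intro that[of b "\<bar>l\<bar> + 1"]) (auto simp: dist_real_def)
  qed
  show ?thesis
  proof (intro exI conjI allI impI)
    show "min (b1 - x) (x - b2) > 0" using b1 b2 by auto
    fix y assume y: "0 \<le> y" "dist y x < min (b1 - x) (x - b2)"
    consider "y < x" | "y = x" | "y > x" by linarith
    then show "\<bar>f y\<bar> \<le> max (\<bar>f x\<bar> + 1) C2"
    proof cases
      case 1 then show ?thesis using b2 y by (auto simp: dist_real_def)
    next
      case 2 then show ?thesis by auto
    next
      case 3 then show ?thesis using b1 y by (auto simp: dist_real_def)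
    qed
  qed
qed

lemma cadlag_bdd:
  assumes "cadlag f"
  shows "\<exists>C. \<forall>s\<in>{0..T}. \<bar>f s\<bar> \<le> C"
proof -
  have "\<forall>x\<in>{0..T}. \<exists>d C. d > 0 \<and> (\<forall>y. 0 \<le> y \<longrightarrow> dist y x < d \<longrightarrow> \<bar>f y\<bar> \<le> C)"
    using cadlag_local_bound[OF assms] by auto
  then obtain d C where dC: "\<And>x. x \<in> {0..T} \<Longrightarrow> d x > 0 \<and> (\<forall>y. 0 \<le> y \<longrightarrow> dist y x < d x \<longrightarrow> \<bar>f y\<bar> \<le> C x)"
    by metis
  have "{0..T} \<subseteq> (\<Union>x\<in>{0..T}. ball x (d x))" using dC by force
  then obtain D where D: "D \<subseteq> {0..T}" "finite D" "{0..T} \<subseteq> (\<Union>x\<in>D. ball x (d x))"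
    using compactE_image[OF compact_Icc, of "{0..T}" "\<lambda>x. ball x (d x)"] by blast
  show ?thesis
  proof (intro exI ballI)
    fix s assume s: "s \<in> {0..T}"
    then obtain x where x: "x \<in> D" "s \<in> ball x (d x)" using D by auto
    have "\<bar>f s\<bar> \<le> C x" using dC[of x] x D s by (auto simp: dist_commute)
    also have "\<dots> \<le> \<bar>C x\<bar>" by simp
    also have "\<dots> \<le> (\<Sum>z\<in>D. \<bar>C z\<bar>)" using D x by (intro member_le_sum) auto
    finally show "\<bar>f s\<bar> \<le> (\<Sum>z\<in>D. \<bar>C z\<bar>)" .
  qed
qed

lemma cadlag_borel:
  assumes "cadlag f"
  shows "(\<lambda>x. f (max x 0)) \<in> borel_measurable borel"
proof (rule borel_measurable_LIMSEQ_real)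
  let ?c = "\<lambda>(n::nat) (x::real). real_of_int \<lceil>max x 0 * 2^n\<rceil> / 2^n"
  show "(\<lambda>x. f (?c n x)) \<in> borel_measurable borel" for n
  proof -
    have g: "(\<lambda>x::real. \<lceil>max x 0 * 2^n\<rceil>) \<in> measurable borel (count_space (UNIV::int set))"
    proof (subst measurable_count_space_eq2_countable, intro conjI ballI)
      fix k :: int
      have "(\<lambda>x::real. \<lceil>max x 0 * 2^n\<rceil>) -` {k} \<inter> space borel
         = {x::real. of_int k - 1 < max x 0 * 2^n \<and> max x 0 * 2^n \<le> of_int k}"
        using ceiling_correct by (auto simp: ceiling_eq_iff)
      also have "\<dots> \<in> sets borel" by measurable
      finally show "(\<lambda>x::real. \<lceil>max x 0 * 2^n\<rceil>) -` {k} \<inter> space borel \<in> sets borel" .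
    qed auto
    show ?thesis
      using measurable_compose_countable[where f="\<lambda>(i::int) x. f (real_of_int i / 2^n)", OF _ g]
      by simp
  qed
  fix x :: real
  define y where "y = max x 0"
  have y: "0 \<le> y" by (simp add: y_def)
  have ceq: "?c n x = real_of_int \<lceil>y * 2^n\<rceil> / 2^n" for n by (simp add: y_def)
  have cl: "y \<le> ?c n x" for n
  proof -
    have "y * 2^n \<le> real_of_int \<lceil>y * 2^n\<rceil>" by simp
    thus ?thesis unfolding ceq by (simp add: pos_le_divide_eq)
  qed
  have cu: "?c n x \<le> y + (1/2)^n" for n
  proof -
    have "real_of_int \<lceil>y * 2^n\<rceil> \<le> y * 2^n + 1" using ceiling_correct[of "y * 2^n"] by linarith
    hence "real_of_int \<lceil>y * 2^n\<rceil> / 2^n \<le> (y * 2^n + 1) / 2^n" by (intro divide_right_mono) auto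
    also have "\<dots> = y + (1/2)^n" by (simp add: add_divide_distrib power_one_over)
    finally show ?thesis unfolding ceq .
  qed
  have "(\<lambda>n. y + (1/2)^n) \<longlonglongrightarrow> y + 0"
    by (intro tendsto_intros) simp
  hence H: "(\<lambda>n. y + (1/2)^n) \<longlonglongrightarrow> y" by simp
  have lim: "(\<lambda>n. ?c n x) \<longlonglongrightarrow> y"
    by (rule real_tendsto_sandwich[OF always_eventually always_eventually tendsto_const H])
       (use cl cu in blast)+
  have "continuous (at_right y) f" using assms y unfolding cadlag_def by auto
  hence "continuous (at y within {y..y+1}) f" by (simp add: at_within_Icc_at_right)
  moreover have mem: "?c n x \<in> {y..y+1}" for n
  proof -
    have "((1::real)/2)^n \<le> 1" by (simp add: power_le_one)
    thus ?thesis using cl[of n] cu[of n] by auto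
  qed
  ultimately have HH: "\<And>s. (\<forall>n. s n \<in> {y..y+1}) \<and> s \<longlonglongrightarrow> y \<Longrightarrow> (f \<circ> s) \<longlonglongrightarrow> f y"
    unfolding continuous_within_sequentially by blast
  have "(f \<circ> (\<lambda>n. ?c n x)) \<longlonglongrightarrow> f y"
    by (rule HH) (use mem lim in blast)
  thus "(\<lambda>n. f (?c n x)) \<longlonglongrightarrow> f (max x 0)" by (simp add: y_def o_def)
qed

lemma cadlag_integrable:
  assumes "cadlag f"
  shows "f integrable_on {0..T}"
proof -
  obtain C where C: "\<forall>s\<in>{0..T}. \<bar>f s\<bar> \<le> C" using cadlag_bdd[OF assms] by blast
  have m: "(\<lambda>x. f (max x 0)) \<in> borel_measurable (lebesgue_on {0..T})"
    using measurable_comp[OF id_borel_measurable_lebesgue_on cadlag_borel[OF assms]] by (simp add: o_def)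
  have "(\<lambda>x. f (max x 0)) absolutely_integrable_on {0..T}"
    by (rule measurable_bounded_by_integrable_imp_absolutely_integrable[OF m, where g="\<lambda>_. C"]) (use C in auto)
  hence "(\<lambda>x. f (max x 0)) integrable_on {0..T}" using absolutely_integrable_on_def by blast
  thus ?thesis by (rule integrable_eq) auto
qed



locale LSV =
  fixes V :: "real \<Rightarrow> real" and S :: "real set"
  assumes cad: "cadlag V"
    and mono: "\<And>s t. 0 \<le> s \<Longrightarrow> s \<le> t \<Longrightarrow> V s \<le> V t"
    and nonneg: "\<And>t. 0 \<le> t \<Longrightarrow> 0 \<le> V t"
    and compl: "(\<integral>\<^sup>+ t. indicator S t \<partial>LS_measure V) = 0"
begin

definition "F = (\<lambda>t. if t < 0 then 0 else V t)"

lemma F_mono: "x \<le> y \<Longrightarrow> F x \<le> F y"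
  unfolding F_def using mono nonneg by auto

lemma F_rc: "continuous (at_right a) F"
proof (cases "a < 0")
  case True
  have "eventually (\<lambda>y. F y = 0) (at_right a)"
    using eventually_at_right[of a 0] True by (auto simp: F_def intro!: exI[of _ 0])
  hence "(F \<longlongrightarrow> 0) (at_right a)" by (rule tendsto_eventually)
  thus ?thesis using True by (simp add: continuous_within F_def)
next
  case False
  hence "continuous (at_right a) V" using cad unfolding cadlag_def by auto
  hence "(V \<longlongrightarrow> V a) (at_right a)" by (simp add: continuous_within)
  moreover have "eventually (\<lambda>y. V y = F y) (at_right a)"
    using False eventually_at_right_less[of a] by (auto simp: F_def elim: eventually_mono)
  ultimately have "(F \<longlongrightarrow> V a) (at_right a)" by (rule Lim_transform_eventually)
  thus ?thesis using False by (simp add: continuous_within F_def)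
qed

lemma LS_eq: "LS_measure V = interval_measure F"
  unfolding LS_measure_def F_def by simp

lemma Ioc: "a \<le> b \<Longrightarrow> emeasure (LS_measure V) {a<..b} = ennreal (F b - F a)"
  unfolding LS_eq by (rule emeasure_interval_measure_Ioc) (auto intro: F_mono F_rc)

lemma null: assumes "A \<in> sets borel" "A \<subseteq> S" shows "emeasure (LS_measure V) A = 0"
proof -
  have "emeasure (LS_measure V) A = (\<integral>\<^sup>+ t. indicator A t \<partial>LS_measure V)"
    using assms by (simp add: LS_eq)
  also have "\<dots> \<le> (\<integral>\<^sup>+ t. indicator S t \<partial>LS_measure V)"
    using assms by (intro nn_integral_mono) (auto split: split_indicator)
  finally show ?thesis using compl by simp
qed

lemma Icc: assumes "a \<le> b"
  shows "emeasure (LS_measure V) {a..b} = (INF k. ennreal (F b - F (a - 1 / Suc k)))"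
proof -
  let ?A = "\<lambda>k::nat. {a - 1 / Suc k<..b}"
  have le: "a - 1 / Suc k \<le> b" for k :: nat
  proof -
    have "0 \<le> 1 / real (Suc k)" by simp
    thus ?thesis using assms by linarith
  qed
  have AE: "(\<lambda>k. emeasure (LS_measure V) (?A k)) = (\<lambda>k. ennreal (F b - F (a - 1 / Suc k)))"
    by (rule ext) (rule Ioc[OF le])
  have "(INF k. emeasure (LS_measure V) (?A k)) = emeasure (LS_measure V) (\<Inter>k. ?A k)"
  proof (rule INF_emeasure_decseq)
    show "range ?A \<subseteq> sets (LS_measure V)" by (auto simp: LS_eq)
    show "decseq ?A"
    proof (rule decseq_SucI)
      fix n :: nat
      have "1 / real (Suc (Suc n)) \<le> 1 / real (Suc n)"
        using frac_le[of 1 1 "real (Suc n)" "real (Suc (Suc n))"] by simp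
      thus "?A (Suc n) \<subseteq> ?A n" by auto
    qed
    show "emeasure (LS_measure V) (?A k) \<noteq> \<infinity>" for k
      by (subst Ioc[OF le]) simp
  qed
  also have "(\<Inter>k. ?A k) = {a..b}"
  proof (auto)
    fix x assume A: "\<forall>k. a - 1 / (1 + real k) < x"
    show "a \<le> x"
    proof (rule ccontr)
      assume "\<not> a \<le> x"
      hence "a - x > 0" by simp
      then obtain k where k: "inverse (real (Suc k)) < a - x"
        using reals_Archimedean by blast
      have "a - 1 / (1 + real k) < x" using A by blast
      thus False using k by (simp add: inverse_eq_divide)
    qed
  next
    fix x k assume "a \<le> x"
    moreover have "0 < 1 / (1 + real k)" by simp
    ultimately show "a - 1 / (1 + real k) < x" by linarith
  qed
  finally show ?thesis unfolding AE by simp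
qed

lemma C1: assumes "0 \<le> s" "s \<le> t" "{s<..t} \<subseteq> S" shows "V t = V s"
proof -
  have "ennreal (F t - F s) = 0" using null[OF _ assms(3)] Ioc[OF assms(2)] by simp
  hence "F t - F s \<le> 0" by (simp add: ennreal_eq_0_iff)
  moreover have "V s \<le> V t" using mono assms by auto
  ultimately show ?thesis using assms by (auto simp: F_def)
qed

lemma C0: assumes "0 \<le> t" "{0..t} \<subseteq> S" shows "V t = 0"
proof -
  have "(INF k. ennreal (F t - F (0 - 1 / Suc k))) = 0"
    using null[OF _ assms(2)] Icc[OF assms(1)] by simp
  moreover have "F (0 - 1 / Suc k) = 0" for k by (simp add: F_def)
  ultimately have "ennreal (F t) = 0" by simp
  hence "F t \<le> 0" by (simp add: ennreal_eq_0_iff)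
  thus ?thesis using assms nonneg[of t] by (auto simp: F_def)
qed

lemma Cs: assumes "0 \<le> s" "s \<in> S" "e > 0"
  shows "\<exists>d>0. \<forall>r. 0 \<le> r \<longrightarrow> s - d < r \<longrightarrow> r < s \<longrightarrow> V s - V r \<le> e"
proof -
  have "(INF k. ennreal (F s - F (s - 1 / Suc k))) = 0"
    using null[of "{s..s}"] Icc[of s s] assms by simp
  hence "(INF k. ennreal (F s - F (s - 1 / Suc k))) < ennreal e" using assms by simp
  then obtain k where k: "ennreal (F s - F (s - 1 / Suc k)) < ennreal e"
    by (auto simp: INF_less_iff)
  hence k': "F s - F (s - 1 / Suc k) < e"
    by (metis ennreal_leI not_le)
  show ?thesis
  proof (intro exI conjI allI impI)
    show "1 / real (Suc k) > 0" by simp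
    fix r assume r: "0 \<le> r" "s - 1 / real (Suc k) < r" "r < s"
    have "F (s - 1 / Suc k) \<le> F r" using r by (intro F_mono) simp
    thus "V s - V r \<le> e" using k' r assms by (simp add: F_def)
  qed
qed
end



lemma RL:
  fixes v :: "real \<Rightarrow> real" and P :: "real \<Rightarrow> bool"
  assumes t: "0 \<le> t" and m: "0 \<le> m"
    and atP: "\<And>r. 0 \<le> r \<Longrightarrow> r \<le> t \<Longrightarrow> P r \<Longrightarrow> v r \<le> m"
    and flat: "\<And>s. 0 \<le> s \<Longrightarrow> s \<le> t \<Longrightarrow> (\<forall>r. s < r \<and> r \<le> t \<longrightarrow> \<not> P r) \<Longrightarrow> v t = v s"
    and zero: "(\<forall>r. 0 \<le> r \<and> r \<le> t \<longrightarrow> \<not> P r) \<Longrightarrow> v t = 0"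
    and lc: "\<And>s e. 0 < s \<Longrightarrow> s \<le> t \<Longrightarrow> \<not> P s \<Longrightarrow> e > 0 \<Longrightarrow>
        \<exists>d>0. \<forall>r. 0 \<le> r \<longrightarrow> s - d < r \<longrightarrow> r < s \<longrightarrow> v s - v r \<le> e"
  shows "v t \<le> m"
proof (cases "\<forall>r. 0 \<le> r \<and> r \<le> t \<longrightarrow> \<not> P r")
  case True
  thus ?thesis using zero m by simp
next
  case False
  define R where "R = {r. 0 \<le> r \<and> r \<le> t \<and> P r}"
  define s where "s = Sup R"
  have ne: "R \<noteq> {}" using False by (auto simp: R_def)
  have bdd: "bdd_above R" by (auto simp: R_def bdd_above_def)
  have sR: "r \<le> s" if "r \<in> R" for r using cSup_upper[OF that bdd] by (simp add: s_def)
  have st: "s \<le> t" unfolding s_def by (rule cSup_least[OF ne]) (auto simp: R_def)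
  obtain r0 where r0: "r0 \<in> R" using ne by auto
  have s0: "0 \<le> s" using sR[OF r0] r0 by (auto simp: R_def)
  have "\<forall>r. s < r \<and> r \<le> t \<longrightarrow> \<not> P r"
  proof (intro allI impI notI)
    fix r assume "s < r \<and> r \<le> t" "P r"
    hence "r \<in> R" using s0 by (auto simp: R_def)
    thus False using sR \<open>s < r \<and> r \<le> t\<close> by fastforce
  qed
  hence vts: "v t = v s" using flat s0 st by blast
  show ?thesis
  proof (cases "P s")
    case True
    thus ?thesis using atP[OF s0 st] vts by simp
  next
    case False
    have spos: "0 < s"
    proof (rule ccontr)
      assume "\<not> 0 < s"
      hence "s = 0" using s0 by simp
      hence "r0 = 0" using sR[OF r0] r0 by (auto simp: R_def)
      thus False using r0 False \<open>s = 0\<close> by (auto simp: R_def)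
    qed
    have "v s \<le> m"
    proof (rule field_le_epsilon)
      fix e :: real assume e: "0 < e"
      obtain d where d: "d > 0" "\<forall>r. 0 \<le> r \<longrightarrow> s - d < r \<longrightarrow> r < s \<longrightarrow> v s - v r \<le> e"
        using lc[OF spos st False e] by blast
      have "s - d < Sup R" using d(1) by (simp add: s_def)
      then obtain r where r: "r \<in> R" "s - d < r" using less_cSup_iff[OF ne bdd] by blast
      have "r \<noteq> s" using r False by (auto simp: R_def)
      hence "r < s" using sR[OF r(1)] by simp
      hence "v s - v r \<le> e" using d r by (auto simp: R_def)
      moreover have "v r \<le> m" using atP r by (auto simp: R_def)
      ultimately show "v s \<le> m + e" by simp
    qed
    thus ?thesis using vts by simp
  qed
qed



lemma exp_int:
  fixes r H :: real
  assumes "0 \<le> r"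
  shows "integral {0..r} (\<lambda>s. H * exp (8 * s)) = H * exp (8 * r) / 8 - H / 8"
proof -
  have "((\<lambda>s. H * exp (8 * s)) has_integral (H * exp (8 * r) / 8 - H * exp (8 * 0) / 8)) {0..r}"
  proof (rule fundamental_theorem_of_calculus[OF assms])
    fix s :: real
    have "((\<lambda>s. H * exp (8 * s) / 8) has_real_derivative H * exp (8 * s)) (at s)"
      by (auto intro!: derivative_eq_intros)
    thus "((\<lambda>s. H * exp (8 * s) / 8) has_vector_derivative H * exp (8 * s)) (at s within {0..r})"
      by (simp add: has_real_derivative_iff_has_vector_derivative has_vector_derivative_at_within)
  qed
  hence "integral {0..r} (\<lambda>s. H * exp (8 * s)) = H * exp (8 * r) / 8 - H * exp (8 * 0) / 8"
    by (rule integral_unique)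
  thus ?thesis by simp
qed

lemma int_bound:
  fixes r H :: real
  fixes f :: "real \<Rightarrow> real"
  assumes "f integrable_on {0..r}" "0 \<le> r" "\<And>s. s \<in> {0..r} \<Longrightarrow> \<bar>f s\<bar> \<le> H * exp (8 * s)"
  shows "\<bar>integral {0..r} f\<bar> \<le> H * exp (8 * r) / 8"
proof -
  have "norm (integral {0..r} f) \<le> integral {0..r} (\<lambda>s. H * exp (8 * s))"
    by (rule integral_norm_bound_integral[OF assms(1)])
       (auto intro!: integrable_continuous_interval continuous_intros simp: assms(3))
  also have "\<dots> = H * exp (8 * r) / 8 - H / 8" by (rule exp_int[OF assms(2)])
  finally have *: "\<bar>integral {0..r} f\<bar> \<le> H * exp (8 * r) / 8 - H / 8" by simp
  have "\<bar>f 0\<bar> \<le> H * exp (8 * 0)" using assms(3)[of 0] assms(2) by simp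
  hence "0 \<le> H" by simp
  thus ?thesis using * by simp
qed


lemma path_bound:
  fixes x1 x2 v1 v2 z1 z2 :: "real \<Rightarrow> real" and Bv :: ereal and K T :: real
  assumes cx1: "cadlag x1" and cx2: "cadlag x2" and cv1: "cadlag v1" and cv2: "cadlag v2"
    and e1: "\<And>t. 0 \<le> t \<Longrightarrow> x1 t = z1 t + integral {0..t} (\<lambda>s. - x1 s + x2 s) - v1 t"
    and e2: "\<And>t. 0 \<le> t \<Longrightarrow> x2 t = z2 t - integral {0..t} (\<lambda>s. x2 s) + v1 t - v2 t"
    and x1le: "\<And>t. 0 \<le> t \<Longrightarrow> x1 t \<le> 0"
    and x2le: "\<And>t. 0 \<le> t \<Longrightarrow> ereal (x2 t) \<le> Bv"
    and B0: "0 \<le> Bv"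
    and m1: "\<And>s t. 0 \<le> s \<Longrightarrow> s \<le> t \<Longrightarrow> v1 s \<le> v1 t"
    and m2: "\<And>s t. 0 \<le> s \<Longrightarrow> s \<le> t \<Longrightarrow> v2 s \<le> v2 t"
    and n1: "\<And>t. 0 \<le> t \<Longrightarrow> 0 \<le> v1 t"
    and n2: "\<And>t. 0 \<le> t \<Longrightarrow> 0 \<le> v2 t"
    and c1: "(\<integral>\<^sup>+ t. indicator {t. 0 \<le> t \<and> x1 t < 0} t \<partial>LS_measure v1) = 0"
    and c2: "(\<integral>\<^sup>+ t. indicator {t. 0 \<le> t \<and> ereal (x2 t) < Bv} t \<partial>LS_measure v2) = 0"
    and zb: "\<And>t. 0 \<le> t \<Longrightarrow> t \<le> T \<Longrightarrow> \<bar>z1 t\<bar> \<le> K \<and> \<bar>z2 t\<bar> \<le> K"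
    and T: "0 \<le> T"
  shows "\<And>t. 0 \<le> t \<Longrightarrow> t \<le> T \<Longrightarrow> \<bar>x1 t\<bar> + \<bar>x2 t\<bar> \<le> 14 * K * exp (8 * T)"
proof -
  interpret L1: LSV v1 "{t. 0 \<le> t \<and> x1 t < 0}" by unfold_locales (use cv1 m1 n1 c1 in auto)
  interpret L2: LSV v2 "{t. 0 \<le> t \<and> ereal (x2 t) < Bv}" by unfold_locales (use cv2 m2 n2 c2 in auto)
  define g where "g s = \<bar>x1 s\<bar> + \<bar>x2 s\<bar>" for s
  have g0: "0 \<le> g s" for s by (simp add: g_def)
  obtain C1 where C1: "\<forall>s\<in>{0..T}. \<bar>x1 s\<bar> \<le> C1" using cadlag_bdd[OF cx1] by blast
  obtain C2 where C2: "\<forall>s\<in>{0..T}. \<bar>x2 s\<bar> \<le> C2" using cadlag_bdd[OF cx2] by blast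
  have gb: "g s * exp (- 8 * s) \<le> C1 + C2" if "s \<in> {0..T}" for s
  proof -
    have "exp (- 8 * s) \<le> 1" using that by simp
    hence "g s * exp (- 8 * s) \<le> g s" using g0[of s] by (intro mult_left_le) auto
    also have "\<dots> \<le> C1 + C2" using C1 C2 that by (simp add: g_def add_mono)
    finally show ?thesis .
  qed
  define H where "H = (SUP s\<in>{0..T}. g s * exp (- 8 * s))"
  have bdd: "bdd_above ((\<lambda>s. g s * exp (- 8 * s)) ` {0..T})"
    using gb by (intro bdd_aboveI2) 
  have gH: "g s \<le> H * exp (8 * s)" if "s \<in> {0..T}" for s
  proof -
    have "g s * exp (- 8 * s) \<le> H" unfolding H_def by (rule cSUP_upper[OF that bdd])
    hence A: "g s * exp (- 8 * s) * exp (8 * s) \<le> H * exp (8 * s)" by (rule mult_right_mono) simp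
    have e: "exp (- 8 * s) * exp (8 * s) = 1" by (simp add: exp_minus)
    have "g s * exp (- 8 * s) * exp (8 * s) = g s"
      by (metis mult.assoc mult.right_neutral e)
    thus ?thesis using A by linarith
  qed
  have H0: "0 \<le> H" using gH[of 0] g0[of 0] T by simp
  have K0: "0 \<le> K" using zb[of 0] T by auto
  have key: "g t \<le> 5 * K + 5 / 8 * H * exp (8 * t)" if t: "0 \<le> t" "t \<le> T" for t
  proof -
    define E where "E = H * exp (8 * t) / 8"
    have E0: "0 \<le> E" using H0 by (simp add: E_def)
    have Er: "H * exp (8 * r) / 8 \<le> E" if "r \<le> t" for r
      unfolding E_def using H0 that by (intro divide_right_mono mult_left_mono) auto
    have I1: "\<bar>integral {0..r} (\<lambda>s. - x1 s + x2 s)\<bar> \<le> E" if r: "0 \<le> r" "r \<le> t" for r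
    proof -
      have "\<bar>integral {0..r} (\<lambda>s. - x1 s + x2 s)\<bar> \<le> H * exp (8 * r) / 8"
      proof (rule int_bound)
        show "(\<lambda>s. - x1 s + x2 s) integrable_on {0..r}"
          by (intro integrable_add integrable_neg cadlag_integrable cx1 cx2)
        show "\<bar>- x1 s + x2 s\<bar> \<le> H * exp (8 * s)" if "s \<in> {0..r}" for s
          using gH[of s] that r t by (auto simp: g_def)
      qed (use r in auto)
      thus ?thesis using Er[OF r(2)] by simp
    qed
    have I2: "\<bar>integral {0..r} x2\<bar> \<le> E" if r: "0 \<le> r" "r \<le> t" for r
    proof -
      have "\<bar>integral {0..r} x2\<bar> \<le> H * exp (8 * r) / 8"
      proof (rule int_bound)
        show "x2 integrable_on {0..r}" by (rule cadlag_integrable[OF cx2])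
        show "\<bar>x2 s\<bar> \<le> H * exp (8 * s)" if "s \<in> {0..r}" for s
          using gH[of s] that r t by (auto simp: g_def)
      qed (use r in auto)
      thus ?thesis using Er[OF r(2)] by simp
    qed
    have v1t: "v1 t \<le> K + E"
    proof -
      have p1: "0 \<le> K + E" using K0 E0 by simp
      have p2: "v1 r \<le> K + E" if "0 \<le> r" "r \<le> t" "x1 r = 0" for r
        using e1[of r] zb[of r] I1[of r] that t by (auto simp: abs_le_iff)
      have p3: "v1 t = v1 s" if "0 \<le> s" "s \<le> t" "\<forall>r. s < r \<and> r \<le> t \<longrightarrow> \<not> x1 r = 0" for s
      proof (rule L1.C1[OF that(1,2)])
        show "{s<..t} \<subseteq> {t. 0 \<le> t \<and> x1 t < 0}"
        proof
          fix r assume "r \<in> {s<..t}"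
          hence r: "s < r" "r \<le> t" by auto
          hence r0: "0 \<le> r" using that(1) by linarith
          have "\<not> x1 r = 0" using that(3) r by blast
          thus "r \<in> {t. 0 \<le> t \<and> x1 t < 0}" using x1le[OF r0] r0 by (auto simp: less_le)
        qed
      qed
      have p4: "v1 t = 0" if "\<forall>r. 0 \<le> r \<and> r \<le> t \<longrightarrow> \<not> x1 r = 0"
      proof (rule L1.C0[OF t(1)])
        show "{0..t} \<subseteq> {t. 0 \<le> t \<and> x1 t < 0}"
        proof
          fix r assume "r \<in> {0..t}"
          hence r: "0 \<le> r" "r \<le> t" by auto
          have "\<not> x1 r = 0" using that r by blast
          thus "r \<in> {t. 0 \<le> t \<and> x1 t < 0}" using x1le[OF r(1)] r by (auto simp: less_le)
        qed
      qed
      have p5: "\<exists>d>0. \<forall>r. 0 \<le> r \<longrightarrow> s - d < r \<longrightarrow> r < s \<longrightarrow> v1 s - v1 r \<le> e"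
        if "0 < s" "s \<le> t" "\<not> x1 s = 0" "0 < e" for s e
      proof (rule L1.Cs)
        show "0 \<le> s" "0 < e" using that by auto
        have "\<not> x1 s = 0" using that by blast
        thus "s \<in> {t. 0 \<le> t \<and> x1 t < 0}" using x1le[of s] that(1) by (auto simp: less_le)
      qed
      show ?thesis by (rule RL[where v=v1 and P="\<lambda>r. x1 r = 0", OF t(1) p1 p2 p3 p4 p5])
    qed
    have v2t: "v2 t \<le> 2 * K + 2 * E"
    proof -
      have p1: "0 \<le> 2 * K + 2 * E" using K0 E0 by simp
      have p2: "v2 r \<le> 2 * K + 2 * E" if r: "0 \<le> r" "r \<le> t" "ereal (x2 r) = Bv" for r
      proof -
        have "0 \<le> x2 r" using B0 r(3) by (metis ereal_less_eq(5))
        moreover have "v1 r \<le> v1 t" using m1 r by auto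
        ultimately show ?thesis
          using e2[of r] zb[of r] I2[of r] r t v1t by (auto simp: abs_le_iff)
      qed
      have p3: "v2 t = v2 s" if "0 \<le> s" "s \<le> t" "\<forall>r. s < r \<and> r \<le> t \<longrightarrow> \<not> ereal (x2 r) = Bv" for s
      proof (rule L2.C1[OF that(1,2)])
        show "{s<..t} \<subseteq> {t. 0 \<le> t \<and> ereal (x2 t) < Bv}"
        proof
          fix r assume "r \<in> {s<..t}"
          hence r: "s < r" "r \<le> t" by auto
          hence r0: "0 \<le> r" using that(1) by linarith
          have "\<not> ereal (x2 r) = Bv" using that(3) r by blast
          thus "r \<in> {t. 0 \<le> t \<and> ereal (x2 t) < Bv}" using x2le[OF r0] r0 by (auto simp: less_le)
        qed
      qed
      have p4: "v2 t = 0" if "\<forall>r. 0 \<le> r \<and> r \<le> t \<longrightarrow> \<not> ereal (x2 r) = Bv"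
      proof (rule L2.C0[OF t(1)])
        show "{0..t} \<subseteq> {t. 0 \<le> t \<and> ereal (x2 t) < Bv}"
        proof
          fix r assume "r \<in> {0..t}"
          hence r: "0 \<le> r" "r \<le> t" by auto
          have "\<not> ereal (x2 r) = Bv" using that r by blast
          thus "r \<in> {t. 0 \<le> t \<and> ereal (x2 t) < Bv}" using x2le[OF r(1)] r by (auto simp: less_le)
        qed
      qed
      have p5: "\<exists>d>0. \<forall>r. 0 \<le> r \<longrightarrow> s - d < r \<longrightarrow> r < s \<longrightarrow> v2 s - v2 r \<le> e"
        if "0 < s" "s \<le> t" "\<not> ereal (x2 s) = Bv" "0 < e" for s e
      proof (rule L2.Cs)
        show "0 \<le> s" "0 < e" using that by auto
        have "\<not> ereal (x2 s) = Bv" using that by blast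
        thus "s \<in> {t. 0 \<le> t \<and> ereal (x2 t) < Bv}" using x2le[of s] that(1) by (auto simp: less_le)
      qed
      show ?thesis by (rule RL[where v=v2 and P="\<lambda>r. ereal (x2 r) = Bv", OF t(1) p1 p2 p3 p4 p5])
    qed
    have i1: "\<bar>integral {0..t} (\<lambda>s. - x1 s + x2 s)\<bar> \<le> E" using I1 t by simp
    have i2: "\<bar>integral {0..t} x2\<bar> \<le> E" using I2 t by simp
    have a: "\<bar>x1 t\<bar> \<le> 2 * K + 2 * E"
      using e1[OF t(1)] x1le[OF t(1)] zb[OF t] i1 n1[OF t(1)] v1t by (auto simp: abs_le_iff)
    have b: "\<bar>x2 t\<bar> \<le> 3 * K + 3 * E"
      using e2[OF t(1)] zb[OF t] i2 n1[OF t(1)] n2[OF t(1)] v1t v2t by (auto simp: abs_le_iff)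
    show ?thesis using a b by (simp add: g_def E_def)
  qed
  have HK: "H \<le> 5 * K + 5 / 8 * H"
    unfolding H_def
  proof (rule cSUP_least)
    show "{0..T} \<noteq> {}" using T by simp
    fix s assume s: "s \<in> {0..T}"
    have "g s * exp (- 8 * s) \<le> (5 * K + 5 / 8 * H * exp (8 * s)) * exp (- 8 * s)"
      using key[of s] s by (intro mult_right_mono) auto
    also have "\<dots> = 5 * K * exp (- 8 * s) + 5 / 8 * H"
      by (simp add: algebra_simps mult.assoc exp_add[symmetric])
    also have "\<dots> \<le> 5 * K + 5 / 8 * H"
    proof -
      have "exp (- 8 * s) \<le> 1" using s by simp
      hence "K * exp (- 8 * s) \<le> K" using K0 by (intro mult_left_le) auto
      thus ?thesis by simp
    qed
    finally show "g s * exp (- 8 * s) \<le> 5 * K + 5 / 8 * (SUP s\<in>{0..T}. g s * exp (- 8 * s))"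
      by (simp add: H_def)
  qed
  hence H14: "H \<le> 14 * K" using K0 by simp
  fix t assume t: "0 \<le> t" "t \<le> T"
  have "\<bar>x1 t\<bar> + \<bar>x2 t\<bar> = g t" by (simp add: g_def)
  also have "\<dots> \<le> H * exp (8 * t)" using gH t by simp
  also have "\<dots> \<le> H * exp (8 * T)" using H0 t by (intro mult_left_mono) auto
  also have "\<dots> \<le> 14 * K * exp (8 * T)" using H14 by (intro mult_right_mono) auto
  finally show "\<bar>x1 t\<bar> + \<bar>x2 t\<bar> \<le> 14 * K * exp (8 * T)" .
qed




theorem mainTheorem7:
  fixes M :: "nat \<Rightarrow> 'a measure"
    and B :: "nat \<Rightarrow> 'a \<Rightarrow> ereal"
    and X01 X02 :: "nat \<Rightarrow> 'a \<Rightarrow> real"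
    and Y1 Y2 X1 X2 V1 V2 :: "nat \<Rightarrow> 'a \<Rightarrow> real \<Rightarrow> real"
  assumes prob: "\<And>n. n \<ge> 1 \<Longrightarrow> prob_space (M n)"
    and B_rv: "\<And>n. n \<ge> 1 \<Longrightarrow> B n \<in> borel_measurable (M n)"
    and B_nonneg: "\<And>n \<omega>. n \<ge> 1 \<Longrightarrow> \<omega> \<in> space (M n) \<Longrightarrow> 0 \<le> B n \<omega>"
    and X01_rv: "\<And>n. n \<ge> 1 \<Longrightarrow> X01 n \<in> borel_measurable (M n)"
    and X02_rv: "\<And>n. n \<ge> 1 \<Longrightarrow> X02 n \<in> borel_measurable (M n)"
    and Y1_rv: "\<And>n. n \<ge> 1 \<Longrightarrow> random_element_D (M n) (Y1 n)"
    and Y2_rv: "\<And>n. n \<ge> 1 \<Longrightarrow> random_element_D (M n) (Y2 n)"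
    and sol_D: "\<And>n \<omega>. n \<ge> 1 \<Longrightarrow> \<omega> \<in> space (M n) \<Longrightarrow>
        cadlag (X1 n \<omega>) \<and> cadlag (X2 n \<omega>) \<and> cadlag (V1 n \<omega>) \<and> cadlag (V2 n \<omega>)"
    and eq1: "\<And>n \<omega> t. n \<ge> 1 \<Longrightarrow> \<omega> \<in> space (M n) \<Longrightarrow> 0 \<le> t \<Longrightarrow>
        X1 n \<omega> t = X01 n \<omega> + Y1 n \<omega> t
          + integral {0..t} (\<lambda>s. - X1 n \<omega> s + X2 n \<omega> s) - V1 n \<omega> t"
    and eq2: "\<And>n \<omega> t. n \<ge> 1 \<Longrightarrow> \<omega> \<in> space (M n) \<Longrightarrow> 0 \<le> t \<Longrightarrow>
        X2 n \<omega> t = X02 n \<omega> + Y2 n \<omega> t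
          - integral {0..t} (\<lambda>s. X2 n \<omega> s) + V1 n \<omega> t - V2 n \<omega> t"
    and X1_le: "\<And>n \<omega> t. n \<ge> 1 \<Longrightarrow> \<omega> \<in> space (M n) \<Longrightarrow> 0 \<le> t \<Longrightarrow> X1 n \<omega> t \<le> 0"
    and X2_le: "\<And>n \<omega> t. n \<ge> 1 \<Longrightarrow> \<omega> \<in> space (M n) \<Longrightarrow> 0 \<le> t \<Longrightarrow>
        ereal (X2 n \<omega> t) \<le> B n \<omega>"
    and V1_mono: "\<And>n \<omega> s t. n \<ge> 1 \<Longrightarrow> \<omega> \<in> space (M n) \<Longrightarrow> 0 \<le> s \<Longrightarrow> s \<le> t \<Longrightarrow>
        V1 n \<omega> s \<le> V1 n \<omega> t"
    and V2_mono: "\<And>n \<omega> s t. n \<ge> 1 \<Longrightarrow> \<omega> \<in> space (M n) \<Longrightarrow> 0 \<le> s \<Longrightarrow> s \<le> t \<Longrightarrow>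
        V2 n \<omega> s \<le> V2 n \<omega> t"
    and V1_nonneg: "\<And>n \<omega> t. n \<ge> 1 \<Longrightarrow> \<omega> \<in> space (M n) \<Longrightarrow> 0 \<le> t \<Longrightarrow> 0 \<le> V1 n \<omega> t"
    and V2_nonneg: "\<And>n \<omega> t. n \<ge> 1 \<Longrightarrow> \<omega> \<in> space (M n) \<Longrightarrow> 0 \<le> t \<Longrightarrow> 0 \<le> V2 n \<omega> t"
    and compl1: "\<And>n \<omega>. n \<ge> 1 \<Longrightarrow> \<omega> \<in> space (M n) \<Longrightarrow>
        (\<integral>\<^sup>+ t. indicator {t. 0 \<le> t \<and> X1 n \<omega> t < 0} t \<partial>LS_measure (V1 n \<omega>)) = 0"
    and compl2: "\<And>n \<omega>. n \<ge> 1 \<Longrightarrow> \<omega> \<in> space (M n) \<Longrightarrow>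
        (\<integral>\<^sup>+ t. indicator {t. 0 \<le> t \<and> ereal (X2 n \<omega> t) < B n \<omega>} t \<partial>LS_measure (V2 n \<omega>)) = 0"
    and X0_sb: "stoch_bounded_rv (\<lambda>n. M (Suc n)) (\<lambda>n \<omega>. max \<bar>X01 (Suc n) \<omega>\<bar> \<bar>X02 (Suc n) \<omega>\<bar>)"
    and Y1_sb: "stoch_bounded_D (\<lambda>n. M (Suc n)) (\<lambda>n. Y1 (Suc n))"
    and Y2_sb: "stoch_bounded_D (\<lambda>n. M (Suc n)) (\<lambda>n. Y2 (Suc n))"
  shows "stoch_bounded_D2 (\<lambda>n. M (Suc n)) (\<lambda>n. X1 (Suc n)) (\<lambda>n. X2 (Suc n))"
proof -
  have sup_le: "sup_norm f T \<le> C" if "\<And>s. 0 \<le> s \<Longrightarrow> s \<le> T \<Longrightarrow> \<bar>f s\<bar> \<le> C" "0 \<le> T" for f :: "real \<Rightarrow> real" and C T :: real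
    unfolding sup_norm_def using that by (intro cSUP_least) auto
  have sup_ge: "\<bar>f s\<bar> \<le> sup_norm f T" if cf: "cadlag f" "0 \<le> s" "s \<le> T" for f :: "real \<Rightarrow> real" and s T :: real
  proof -
    obtain C where C: "\<forall>s\<in>{0..T}. \<bar>f s\<bar> \<le> C" using cadlag_bdd[OF cf(1)] by blast
    have "bdd_above ((\<lambda>s. \<bar>f s\<bar>) ` {0..T})" using C by (intro bdd_aboveI2) auto
    thus ?thesis unfolding sup_norm_def using cf by (intro cSUP_upper) auto
  qed
  show ?thesis
    unfolding stoch_bounded_D2_def stoch_bounded_rv_def
  proof (intro allI impI)
    fix T e :: real assume T: "0 < T" and e: "0 < e"
    have e3: "0 < e / 3" using e by simp
    obtain K0 where K0: "\<forall>n. \<exists>A\<in>sets (M (Suc n)). {\<omega> \<in> space (M (Suc n)). K0 < \<bar>max \<bar>X01 (Suc n) \<omega>\<bar> \<bar>X02 (Suc n) \<omega>\<bar>\<bar>} \<subseteq> A \<and> measure (M (Suc n)) A \<le> e / 3"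
      using X0_sb e3 unfolding stoch_bounded_rv_def by blast
    obtain K1 where K1: "\<forall>n. \<exists>A\<in>sets (M (Suc n)). {\<omega> \<in> space (M (Suc n)). K1 < \<bar>sup_norm (Y1 (Suc n) \<omega>) T\<bar>} \<subseteq> A \<and> measure (M (Suc n)) A \<le> e / 3"
      using Y1_sb e3 T unfolding stoch_bounded_D_def stoch_bounded_rv_def by blast
    obtain K2 where K2: "\<forall>n. \<exists>A\<in>sets (M (Suc n)). {\<omega> \<in> space (M (Suc n)). K2 < \<bar>sup_norm (Y2 (Suc n) \<omega>) T\<bar>} \<subseteq> A \<and> measure (M (Suc n)) A \<le> e / 3"
      using Y2_sb e3 T unfolding stoch_bounded_D_def stoch_bounded_rv_def by blast
    define Kp where "Kp = max K0 0 + max K1 0 + max K2 0"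
    show "\<exists>K. \<forall>n. \<exists>A\<in>sets (M (Suc n)). {\<omega> \<in> space (M (Suc n)). K < \<bar>max (sup_norm (X1 (Suc n) \<omega>) T) (sup_norm (X2 (Suc n) \<omega>) T)\<bar>} \<subseteq> A \<and> measure (M (Suc n)) A \<le> e"
    proof (intro exI allI)
      fix n
      have n1: "1 \<le> Suc n" by simp
      obtain A0 where A0: "A0 \<in> sets (M (Suc n))" "{\<omega> \<in> space (M (Suc n)). K0 < \<bar>max \<bar>X01 (Suc n) \<omega>\<bar> \<bar>X02 (Suc n) \<omega>\<bar>\<bar>} \<subseteq> A0" "measure (M (Suc n)) A0 \<le> e / 3"
        using K0 by blast
      obtain A1 where A1: "A1 \<in> sets (M (Suc n))" "{\<omega> \<in> space (M (Suc n)). K1 < \<bar>sup_norm (Y1 (Suc n) \<omega>) T\<bar>} \<subseteq> A1" "measure (M (Suc n)) A1 \<le> e / 3"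
        using K1 by blast
      obtain A2 where A2: "A2 \<in> sets (M (Suc n))" "{\<omega> \<in> space (M (Suc n)). K2 < \<bar>sup_norm (Y2 (Suc n) \<omega>) T\<bar>} \<subseteq> A2" "measure (M (Suc n)) A2 \<le> e / 3"
        using K2 by blast
      show "\<exists>A\<in>sets (M (Suc n)). {\<omega> \<in> space (M (Suc n)). 14 * Kp * exp (8 * T) < \<bar>max (sup_norm (X1 (Suc n) \<omega>) T) (sup_norm (X2 (Suc n) \<omega>) T)\<bar>} \<subseteq> A \<and> measure (M (Suc n)) A \<le> e"
      proof (intro bexI conjI)
        show "A0 \<union> A1 \<union> A2 \<in> sets (M (Suc n))" using A0 A1 A2 by auto
        have "measure (M (Suc n)) (A0 \<union> A1 \<union> A2) \<le> measure (M (Suc n)) (A0 \<union> A1) + measure (M (Suc n)) A2"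
          using A0 A1 A2 by (intro measure_Un_le) auto
        also have "\<dots> \<le> measure (M (Suc n)) A0 + measure (M (Suc n)) A1 + measure (M (Suc n)) A2"
          using A0 A1 measure_Un_le[of A0 "M (Suc n)" A1] by simp
        also have "\<dots> \<le> e" using A0 A1 A2 by simp
        finally show "measure (M (Suc n)) (A0 \<union> A1 \<union> A2) \<le> e" .
        show "{\<omega> \<in> space (M (Suc n)). 14 * Kp * exp (8 * T) < \<bar>max (sup_norm (X1 (Suc n) \<omega>) T) (sup_norm (X2 (Suc n) \<omega>) T)\<bar>} \<subseteq> A0 \<union> A1 \<union> A2"
        proof (rule subsetI, rule ccontr)
          fix \<omega> assume wm: "\<omega> \<in> {\<omega> \<in> space (M (Suc n)). 14 * Kp * exp (8 * T) < \<bar>max (sup_norm (X1 (Suc n) \<omega>) T) (sup_norm (X2 (Suc n) \<omega>) T)\<bar>}"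
            and nA: "\<omega> \<notin> A0 \<union> A1 \<union> A2"
          have w: "\<omega> \<in> space (M (Suc n))" using wm by simp
          have big: "14 * Kp * exp (8 * T) < \<bar>max (sup_norm (X1 (Suc n) \<omega>) T) (sup_norm (X2 (Suc n) \<omega>) T)\<bar>" using wm by simp
          have b0: "max \<bar>X01 (Suc n) \<omega>\<bar> \<bar>X02 (Suc n) \<omega>\<bar> \<le> K0" using A0(2) nA w by auto
          have b1: "\<bar>sup_norm (Y1 (Suc n) \<omega>) T\<bar> \<le> K1" using A1(2) nA w by auto
          have b2: "\<bar>sup_norm (Y2 (Suc n) \<omega>) T\<bar> \<le> K2" using A2(2) nA w by auto
          have cY1: "cadlag (Y1 (Suc n) \<omega>)" using Y1_rv[OF n1] w unfolding random_element_D_def by blast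
          have cY2: "cadlag (Y2 (Suc n) \<omega>)" using Y2_rv[OF n1] w unfolding random_element_D_def by blast
          have sol: "cadlag (X1 (Suc n) \<omega>)" "cadlag (X2 (Suc n) \<omega>)" "cadlag (V1 (Suc n) \<omega>)" "cadlag (V2 (Suc n) \<omega>)"
            using sol_D[OF n1 w] by auto
          have zb: "\<bar>X01 (Suc n) \<omega> + Y1 (Suc n) \<omega> t\<bar> \<le> Kp \<and> \<bar>X02 (Suc n) \<omega> + Y2 (Suc n) \<omega> t\<bar> \<le> Kp"
            if "0 \<le> t" "t \<le> T" for t
          proof -
            have "\<bar>Y1 (Suc n) \<omega> t\<bar> \<le> sup_norm (Y1 (Suc n) \<omega>) T" by (rule sup_ge[OF cY1 that])
            moreover have "\<bar>Y2 (Suc n) \<omega> t\<bar> \<le> sup_norm (Y2 (Suc n) \<omega>) T" by (rule sup_ge[OF cY2 that])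
            ultimately show ?thesis using b0 b1 b2 unfolding Kp_def by (auto simp: abs_le_iff)
          qed
          have pb: "\<And>t. 0 \<le> t \<Longrightarrow> t \<le> T \<Longrightarrow> \<bar>X1 (Suc n) \<omega> t\<bar> + \<bar>X2 (Suc n) \<omega> t\<bar> \<le> 14 * Kp * exp (8 * T)"
            by (rule path_bound[where ?z1.0="\<lambda>t. X01 (Suc n) \<omega> + Y1 (Suc n) \<omega> t"
                  and ?z2.0="\<lambda>t. X02 (Suc n) \<omega> + Y2 (Suc n) \<omega> t",
                  OF sol eq1[OF n1 w] eq2[OF n1 w] X1_le[OF n1 w] X2_le[OF n1 w] B_nonneg[OF n1 w]
                  V1_mono[OF n1 w] V2_mono[OF n1 w] V1_nonneg[OF n1 w] V2_nonneg[OF n1 w]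
                  compl1[OF n1 w] compl2[OF n1 w] zb less_imp_le[OF T]])
          have s1: "sup_norm (X1 (Suc n) \<omega>) T \<le> 14 * Kp * exp (8 * T)"
          proof (rule sup_le)
            fix s assume "0 \<le> s" "s \<le> T"
            thus "\<bar>X1 (Suc n) \<omega> s\<bar> \<le> 14 * Kp * exp (8 * T)"
              using pb[of s] abs_ge_zero[of "X2 (Suc n) \<omega> s"] by linarith
          qed (use T in simp)
          have s2: "sup_norm (X2 (Suc n) \<omega>) T \<le> 14 * Kp * exp (8 * T)"
          proof (rule sup_le)
            fix s assume "0 \<le> s" "s \<le> T"
            thus "\<bar>X2 (Suc n) \<omega> s\<bar> \<le> 14 * Kp * exp (8 * T)"
              using pb[of s] abs_ge_zero[of "X1 (Suc n) \<omega> s"] by linarith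
          qed (use T in simp)
          have s1': "0 \<le> sup_norm (X1 (Suc n) \<omega>) T"
            using sup_ge[OF sol(1), of 0 T] T by simp
          show False using big s1 s2 s1' by simp
        qed
      qed
    qed
  qed
qed


end
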